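(* Let $\{\nu_t\}_{t\ge0}\subset\mathcal{P}(\mathbb{T})$ be a weakly continuous $\rhd$-convolution semigroup with $\nu_0=\delta_1$ and $\nu_1=\delta_{e^{i\alpha}}$ for some $\alpha\in\mathbb{R}$. Let $B_2:\mathbb{D}\to\mathbb{C}$ be an analytic function with $\operatorname{Re}B_2\le0$ such that $$\frac{d}{dt}\eta_{\nu_t}(z)=\eta_{\nu_t}(z)\,B_2(\eta_{\nu_t}(z))\qquad\text{for all } t\ge0,\ z\in\mathbb{D}.$$ Then $B_2$ is a constant function with value in $i\mathbb{R}$.
   Context: $\mathbb{T}$ is the unit circle, $\mathbb{D}$ the open unit disc, $\mathcal{P}(\mathbb{T})$ the Borel probability measures on $\mathbb{T}$, and $\delta_a$ the Dirac mass at $a$. For $\nu\in\mathcal{P}(\mathbb{T})$ let $\psi_\nu(z)=\int\frac{z\zeta}{1-z\zeta}d\nu(\zeta)$ and $\eta_\nu=\psi_\nu/(1+\psi_\nu)$ on $\mathbb{D}$; $\eta_\nu$ determines $\nu$. The multiplicative monotone convolution $\nu_1\rhd\nu_2$ is defined by $\eta_{\nu_1\rhd\nu_2}=\eta_{\nu_1}\circ\eta_{\nu_2}$. A weakly continuous $\rhd$-convolution semigroup is a family $\{\nu_t\}_{t\ge0}$ with $\nu_{s+t}=\nu_s\rhd\nu_t$ for all $s,t\ge0$ and $t\mapsto\nu_t$ weakly continuous. *)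

theory Defs
  imports "HOL-Probability.Probability"
begin

text \<open>Borel probability measures on the unit circle T, represented as probability
measures on the Borel sets of the complex plane that are concentrated on T.\<close>
definition circle_prob :: "complex measure \<Rightarrow> bool" where
  "circle_prob \<nu> \<longleftrightarrow> prob_space \<nu> \<and> sets \<nu> = sets borel \<and>
     emeasure \<nu> (sphere 0 1) = 1"

definition psi_tr :: "complex measure \<Rightarrow> complex \<Rightarrow> complex" where
  "psi_tr \<nu> z = (\<integral>\<zeta>. z * \<zeta> / (1 - z * \<zeta>) \<partial>\<nu>)"

definition eta_tr :: "complex measure \<Rightarrow> complex \<Rightarrow> complex" where
  "eta_tr \<nu> z = psi_tr \<nu> z / (1 + psi_tr \<nu> z)"

definition is_mon_conv :: "complex measure \<Rightarrow> complex measure \<Rightarrow> complex measure \<Rightarrow> bool" where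
  "is_mon_conv \<nu>1 \<nu>2 \<mu> \<longleftrightarrow> (\<forall>z\<in>ball 0 1. eta_tr \<mu> z = eta_tr \<nu>1 (eta_tr \<nu>2 z))"

definition weakly_cont_mon_semigroup :: "(real \<Rightarrow> complex measure) \<Rightarrow> bool" where
  "weakly_cont_mon_semigroup \<nu> \<longleftrightarrow>
     (\<forall>t\<ge>0. circle_prob (\<nu> t)) \<and>
     (\<forall>s\<ge>0. \<forall>t\<ge>0. is_mon_conv (\<nu> s) (\<nu> t) (\<nu> (s + t))) \<and>
     (\<forall>f :: complex \<Rightarrow> real. continuous_on (sphere 0 1) f \<longrightarrow>
        continuous_on {0..} (\<lambda>t. \<integral>\<zeta>. f \<zeta> \<partial>(\<nu> t)))"

end

theory Submission
  imports Defs "HOL-Complex_Analysis.Complex_Analysis"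
begin

lemma key:
  fixes w :: "real \<Rightarrow> complex" and B :: "complex \<Rightarrow> complex" and z :: complex
  assumes der: "\<forall>t\<ge>0. (w has_vector_derivative (w t * B (w t))) (at t within {0..})"
    and neg: "\<forall>u\<in>ball 0 1. Re (B u) \<le> 0"
    and w0: "w 0 = z" and z1: "norm z < 1" and w1: "norm (w 1) = norm z" and z0: "z \<noteq> 0"
  shows "Re (B z) = 0"
proof -
  define h where "h t = Re (w t * cnj (w t))" for t
  have hn: "h t = (norm (w t))^2" for t
    unfolding h_def by (metis Re_complex_of_real complex_norm_square)
  have hder: "(h has_real_derivative (2 * h t * Re (B (w t)))) (at t within {0..})" if "t \<ge> 0" for t
  proof -
    have "(h has_real_derivative Re (w t * cnj (w t * B (w t)) + w t * B (w t) * cnj (w t))) (at t within {0..})"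
      unfolding h_def[abs_def] by (rule has_field_derivative_Re[OF has_vector_derivative_mult[OF der[rule_format, OF that] has_vector_derivative_cnj[OF der[rule_format, OF that]]]])
    moreover have "Re (w t * cnj (w t * B (w t)) + w t * B (w t) * cnj (w t)) = 2 * h t * Re (B (w t))"
      unfolding h_def by (simp add: algebra_simps)
    ultimately show ?thesis by simp
  qed
  have hderat: "(h has_real_derivative (2 * h t * Re (B (w t)))) (at t)" if "t > 0" for t
  proof -
    have "(h has_real_derivative (2 * h t * Re (B (w t)))) (at t within {0<..})"
      using that by (intro DERIV_subset[OF hder[of t]]) auto
    moreover have "at t within {0<..} = at t" by (rule at_within_open) (use that in auto)
    ultimately show ?thesis by simp
  qed
  have hcont: "continuous_on {0..} h"
    unfolding continuous_on_eq_continuous_within by (auto intro: DERIV_continuous[OF hder])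
  have dec: "h b \<le> h a" if "0 \<le> a" "a \<le> b" "\<forall>t. a < t \<and> t < b \<longrightarrow> h t < 1" for a b
  proof (rule DERIV_nonpos_imp_decreasing_open[OF \<open>a \<le> b\<close>])
    fix x assume x: "a < x" "x < b"
    have "h x < 1" using that x by auto
    hence "w x \<in> ball 0 1" using hn[of x] by (simp add: power_less_one_iff)
    hence "Re (B (w x)) \<le> 0" using neg by auto
    moreover have "h x \<ge> 0" using hn by simp
    ultimately show "\<exists>y. DERIV h x :> y \<and> y \<le> 0"
      using hderat[of x] x that(1) by (intro exI[of _ "2 * h x * Re (B (w x))"]) (auto simp: mult_nonneg_nonpos)
  next
    show "continuous_on {a..b} h" using that by (intro continuous_on_subset[OF hcont]) auto
  qed
  have h0: "h 0 = (norm z)^2" using hn w0 by simp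
  have h0lt: "h 0 < 1" using h0 z1 by (simp add: power_less_one_iff)
  have below: "h t < 1" if "0 \<le> t" "t \<le> 1" for t
  proof (rule ccontr)
    assume "\<not> h t < 1"
    define m where "m = (h 0 + 1) / 2"
    have m: "h 0 < m" "m < 1" using h0lt unfolding m_def by auto
    define S where "S = {0..1} \<inter> h -` {m..}"
    have "closed S" unfolding S_def
      by (rule continuous_closed_preimage) (use continuous_on_subset[OF hcont] in auto)
    moreover have "S \<subseteq> {0..1}" unfolding S_def by auto
    ultimately have "compact S" using compact_Int_closed[OF compact_Icc[of 0 1], of S] by (simp add: Int_absorb1)
    moreover have "t \<in> S" using that \<open>\<not> h t < 1\<close> m unfolding S_def by auto
    ultimately obtain s where s: "s \<in> S" "\<forall>u\<in>S. s \<le> u" using compact_attains_inf by blast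
    have s0: "s \<ge> 0" "s \<le> 1" "h s \<ge> m" using s unfolding S_def by auto
    have "\<forall>u. 0 < u \<and> u < s \<longrightarrow> h u < 1"
    proof safe
      fix u assume u: "0 < u" "u < s"
      have "u \<notin> S" using s(2) u(2) leD by blast
      thus "h u < 1" using u s0 m unfolding S_def by auto
    qed
    hence "h s \<le> h 0" using dec[of 0 s] s0 by auto
    thus False using s0 m by auto
  qed
  have h1: "h 1 = h 0" using hn w1 w0 by simp
  have const: "h t = h 0" if "0 \<le> t" "t \<le> 1" for t
  proof -
    have "h t \<le> h 0" using dec[of 0 t] below that by auto
    moreover have "h 1 \<le> h t" using dec[of t 1] below that by auto
    ultimately show ?thesis using h1 by simp
  qed
  have d1: "(h has_real_derivative (2 * h 0 * Re (B z))) (at 0 within {0..1})"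
    using DERIV_subset[OF hder[of 0], of "{0..1}"] w0 by auto
  have d2: "((\<lambda>_. h 0) has_real_derivative (2 * h 0 * Re (B z))) (at 0 within {0..1})"
    by (rule has_field_derivative_transform_within[OF d1, of 1]) (auto intro!: const)
  have d3: "((\<lambda>_. h 0) has_real_derivative 0) (at 0 within {0..1})" by simp
  have nt: "at (0::real) within {0..1} \<noteq> bot"
    using at_within_Icc_at_right[of "0::real" 1] trivial_limit_at_right_real by simp
  have "2 * h 0 * Re (B z) = 0"
    using vector_derivative_unique_within[OF nt] d2 d3
    unfolding has_real_derivative_iff_has_vector_derivative by blast
  moreover have "h 0 \<noteq> 0" using h0 z0 by simp
  ultimately show ?thesis by simp
qed

lemma eta_return:
  assumes "norm z < 1" "norm a = 1"
  shows "eta_tr (return borel a) z = z * a"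
proof -
  have "(\<lambda>\<zeta>. z * \<zeta> / (1 - z * \<zeta>)) \<in> borel_measurable borel" by measurable
  hence p: "psi_tr (return borel a) z = z * a / (1 - z * a)"
    unfolding psi_tr_def by (simp add: integral_return)
  have "norm (z * a) < 1" using assms by (simp add: norm_mult)
  hence ne: "1 - z * a \<noteq> 0" by auto
  show ?thesis unfolding eta_tr_def p using ne by (simp add: field_simps)
qed

theorem proposition5p5:
  fixes \<nu> :: "real \<Rightarrow> complex measure" and \<alpha> :: real and B2 :: "complex \<Rightarrow> complex"
  assumes "weakly_cont_mon_semigroup \<nu>"
    and "\<nu> 0 = return borel 1"
    and "\<nu> 1 = return borel (cis \<alpha>)"
    and "B2 holomorphic_on ball 0 1"
    and "\<forall>z\<in>ball 0 1. Re (B2 z) \<le> 0"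
    and "\<forall>t\<ge>0. \<forall>z\<in>ball 0 1.
           ((\<lambda>s. eta_tr (\<nu> s) z) has_vector_derivative
              (eta_tr (\<nu> t) z * B2 (eta_tr (\<nu> t) z))) (at t within {0..})"
  shows "\<exists>c. Re c = 0 \<and> (\<forall>z\<in>ball 0 1. B2 z = c)"
proof -
  have re0: "Re (B2 z) = 0" if z: "z \<in> ball 0 1" "z \<noteq> 0" for z
  proof (rule key[where w = "\<lambda>s. eta_tr (\<nu> s) z" and B = B2 and z = z])
    show "\<forall>t\<ge>0. ((\<lambda>s. eta_tr (\<nu> s) z) has_vector_derivative
              (eta_tr (\<nu> t) z * B2 (eta_tr (\<nu> t) z))) (at t within {0..})"
      using assms(6) z by blast
    show "\<forall>u\<in>ball 0 1. Re (B2 u) \<le> 0" using assms(5) .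
    show "norm z < 1" using z by simp
    show "eta_tr (\<nu> 0) z = z" using z by (simp add: assms(2) eta_return)
    show "norm (eta_tr (\<nu> 1) z) = norm z" using z by (simp add: assms(3) eta_return norm_mult)
    show "z \<noteq> 0" using z by simp
  qed
  have cont: "isCont B2 0"
    using holomorphic_on_imp_continuous_on[OF assms(4)]
    by (meson centre_in_ball continuous_on_eq_continuous_at open_ball zero_less_one)
  have l1: "((\<lambda>z. Re (B2 z)) \<longlongrightarrow> Re (B2 0)) (at 0)"
    using cont by (intro tendsto_Re) (simp add: isCont_def)
  have ev: "eventually (\<lambda>z. Re (B2 z) = 0) (at (0::complex))"
    unfolding eventually_at
    by (rule exI[of _ 1]) (auto intro!: re0)
  have l2: "((\<lambda>z. Re (B2 z)) \<longlongrightarrow> 0) (at (0::complex))"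
    by (rule tendsto_eventually[OF ev])
  have r00: "Re (B2 0) = 0"
    using tendsto_unique[OF at_neq_bot l1 l2] .
  have allre: "\<forall>z\<in>ball 0 1. Re (B2 z) = 0"
    using re0 r00 by blast
  have "B2 constant_on ball 0 1"
  proof (rule ccontr)
    assume nc: "\<not> B2 constant_on ball 0 1"
    have "open (B2 ` ball 0 1)"
      by (rule open_mapping_thm[OF assms(4) _ _ _ _ nc]) auto
    moreover have "B2 0 \<in> B2 ` ball 0 1" by simp
    ultimately obtain e where e: "e > 0" "ball (B2 0) e \<subseteq> B2 ` ball 0 1"
      using open_contains_ball by blast
    have "B2 0 + of_real (e/2) \<in> ball (B2 0) e" using e by (simp add: dist_norm)
    hence "B2 0 + of_real (e/2) \<in> B2 ` ball 0 1" using e(2) by (rule rev_subsetD)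
    then obtain x where x: "x \<in> ball 0 1" "B2 0 + of_real (e/2) = B2 x" by (rule imageE)
    have "Re (B2 x) = 0" using allre x(1) by blast
    hence "Re (B2 0) + e/2 = 0" using x(2)[symmetric] by simp
    thus False using e r00 by simp
  qed
  then obtain c where c: "\<forall>z\<in>ball 0 1. B2 z = c" unfolding constant_on_def by blast
  hence "Re c = 0" using r00 by (metis centre_in_ball zero_less_one)
  thus ?thesis using c by blast
qed
end
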